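(* Let $R$ be a ring, let $N\ge0$ and $0\le n\le N$, and let $\mathfrak{J}$ be a set of subsets of $[0,N]=\{0,1,\dots,N\}$. In $R[X_1,\dots,X_N]$ put $X_0:=1-X_1-\cdots-X_N$. Then \[(X_{n+1},\dots,X_N)+\bigcap_{J\in\mathfrak{J}}(X_i)_{i\in J}=\bigcap_{J\in\mathfrak{J}}\Big((X_i)_{i\in J}+(X_{n+1},\dots,X_N)\Big).\] *)

theory Defs
  imports Main "HOL-Library.Poly_Mapping"
begin

text \<open>Polynomials over a commutative ring 'a in variables indexed by nat:
  a polynomial is a finitely supported map from monomials (exponent vectors)
  to coefficients.\<close>

type_synonym 'a mpoly = "(nat \<Rightarrow>\<^sub>0 nat) \<Rightarrow>\<^sub>0 'a"

definition polyring :: "nat \<Rightarrow> 'a::comm_ring_1 mpoly set" where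
  "polyring N = {p :: 'a mpoly. \<forall>m \<in> Poly_Mapping.keys p. Poly_Mapping.keys m \<subseteq> {1..N}}"

definition Var :: "nat \<Rightarrow> nat \<Rightarrow> 'a::comm_ring_1 mpoly" where
  "Var N i = (if i = 0 then 1 - (\<Sum>j\<in>{1..N}. Poly_Mapping.single (Poly_Mapping.single j 1) 1)
              else Poly_Mapping.single (Poly_Mapping.single i 1) 1)"

definition gen_ideal :: "nat \<Rightarrow> 'a::comm_ring_1 mpoly set \<Rightarrow> 'a mpoly set" where
  "gen_ideal N S = {(\<Sum>s\<in>F. c s * s) | F c. finite F \<and> F \<subseteq> S \<and> (\<forall>s\<in>F. c s \<in> polyring N)}"

definition ideal_sum :: "'a::comm_ring_1 mpoly set \<Rightarrow> 'a mpoly set \<Rightarrow> 'a mpoly set" where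
  "ideal_sum I J = {a + b | a b. a \<in> I \<and> b \<in> J}"

text \<open>Intersection of a family of ideals of R[X_1,...,X_N] (empty family gives the whole ring).\<close>
definition ideal_Inter :: "nat \<Rightarrow> 'a::comm_ring_1 mpoly set set \<Rightarrow> 'a mpoly set" where
  "ideal_Inter N \<I> = polyring N \<inter> \<Inter>\<I>"

end

theory Submission
  imports Defs
begin


definition Xv :: "nat \<Rightarrow> 'a::comm_ring_1 mpoly" where
  "Xv i = Poly_Mapping.single (Poly_Mapping.single i 1) 1"

definition Cst :: "'a::comm_ring_1 \<Rightarrow> 'a mpoly" where
  "Cst a = Poly_Mapping.single 0 a"

definition mv :: "(nat \<Rightarrow> 'a::comm_ring_1 mpoly) \<Rightarrow> (nat \<Rightarrow>\<^sub>0 nat) \<Rightarrow> 'a mpoly" where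
  "mv \<sigma> m = (\<Prod>i\<in>Poly_Mapping.keys m. \<sigma> i ^ Poly_Mapping.lookup m i)"

definition sub :: "(nat \<Rightarrow> 'a::comm_ring_1 mpoly) \<Rightarrow> 'a mpoly \<Rightarrow> 'a mpoly" where
  "sub \<sigma> p = (\<Sum>m\<in>Poly_Mapping.keys p. Cst (Poly_Mapping.lookup p m) * mv \<sigma> m)"

lemma pm_sum_singles:
  "(p::'k \<Rightarrow>\<^sub>0 'v::comm_monoid_add) = (\<Sum>m\<in>Poly_Mapping.keys p. Poly_Mapping.single m (Poly_Mapping.lookup p m))"
  by (rule poly_mapping_eqI) (simp add: lookup_sum lookup_single when_def in_keys_iff)

lemma keys_add_nat: "Poly_Mapping.keys ((m::nat\<Rightarrow>\<^sub>0nat) + m') = Poly_Mapping.keys m \<union> Poly_Mapping.keys m'"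
  by (auto simp: in_keys_iff lookup_add)

lemma Cst_0 [simp]: "Cst 0 = 0" by (simp add: Cst_def)
lemma Cst_add: "Cst (a + b) = Cst a + Cst b" by (simp add: Cst_def single_add)
lemma Cst_mult: "Cst (a * b) = Cst a * Cst b" by (simp add: Cst_def mult_single)

lemma mv_superset:
  assumes "finite S" "Poly_Mapping.keys m \<subseteq> S"
  shows "mv \<sigma> m = (\<Prod>i\<in>S. \<sigma> i ^ Poly_Mapping.lookup m i)"
  unfolding mv_def using assms
  by (intro prod.mono_neutral_left) (auto simp: in_keys_iff)

lemma mv_add: "mv \<sigma> (m + m') = mv \<sigma> m * mv \<sigma> m'"
proof -
  let ?S = "Poly_Mapping.keys m \<union> Poly_Mapping.keys m'"
  have "mv \<sigma> (m + m') = (\<Prod>i\<in>?S. \<sigma> i ^ Poly_Mapping.lookup (m+m') i)"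
    by (rule mv_superset) (auto simp: keys_add_nat)
  also have "\<dots> = (\<Prod>i\<in>?S. \<sigma> i ^ Poly_Mapping.lookup m i * \<sigma> i ^ Poly_Mapping.lookup m' i)"
    by (simp add: lookup_add power_add)
  also have "\<dots> = mv \<sigma> m * mv \<sigma> m'"
    by (simp add: prod.distrib mv_superset[of ?S m] mv_superset[of ?S m'])
  finally show ?thesis .
qed

lemma mv_zero [simp]: "mv \<sigma> 0 = 1" by (simp add: mv_def)

lemma sub_superset:
  assumes "finite S" "Poly_Mapping.keys p \<subseteq> S"
  shows "sub \<sigma> p = (\<Sum>m\<in>S. Cst (Poly_Mapping.lookup p m) * mv \<sigma> m)"
  unfolding sub_def using assms
  by (intro sum.mono_neutral_left) (auto simp: in_keys_iff)

lemma sub_add: "sub \<sigma> (p + q) = sub \<sigma> p + sub \<sigma> q"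
proof -
  let ?S = "Poly_Mapping.keys p \<union> Poly_Mapping.keys q"
  have "sub \<sigma> (p + q) = (\<Sum>m\<in>?S. Cst (Poly_Mapping.lookup (p+q) m) * mv \<sigma> m)"
    by (rule sub_superset) (auto dest: keys_add[THEN subsetD])
  also have "\<dots> = (\<Sum>m\<in>?S. Cst (Poly_Mapping.lookup p m) * mv \<sigma> m + Cst (Poly_Mapping.lookup q m) * mv \<sigma> m)"
    by (simp add: lookup_add Cst_add distrib_right)
  also have "\<dots> = sub \<sigma> p + sub \<sigma> q"
    by (simp add: sum.distrib sub_superset[of ?S p] sub_superset[of ?S q])
  finally show ?thesis .
qed

lemma sub_zero [simp]: "sub \<sigma> 0 = 0" by (simp add: sub_def)

lemma sub_uminus: "sub \<sigma> (- p) = - sub \<sigma> p"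
  using sub_add[of \<sigma> "-p" p] by (simp add: eq_neg_iff_add_eq_0)

lemma sub_diff: "sub \<sigma> (p - q) = sub \<sigma> p - sub \<sigma> q"
  using sub_add[of \<sigma> p "-q"] by (simp add: sub_uminus)

lemma sub_sum: "sub \<sigma> (\<Sum>i\<in>A. f i) = (\<Sum>i\<in>A. sub \<sigma> (f i))"
  by (induction A rule: infinite_finite_induct) (auto simp: sub_add)

lemma sub_single: "sub \<sigma> (Poly_Mapping.single m a) = Cst a * mv \<sigma> m"
  by (cases "a = 0") (simp_all add: sub_def)

lemma sub_mult: "sub \<sigma> (p * q) = sub \<sigma> p * sub \<sigma> q"
proof -
  have "p * q = (\<Sum>m\<in>Poly_Mapping.keys p. \<Sum>m'\<in>Poly_Mapping.keys q.
      Poly_Mapping.single (m + m') (Poly_Mapping.lookup p m * Poly_Mapping.lookup q m'))"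
    by (subst pm_sum_singles[of p], subst pm_sum_singles[of q]) (simp add: sum_product mult_single)
  hence "sub \<sigma> (p * q) = (\<Sum>m\<in>Poly_Mapping.keys p. \<Sum>m'\<in>Poly_Mapping.keys q.
      (Cst (Poly_Mapping.lookup p m) * mv \<sigma> m) * (Cst (Poly_Mapping.lookup q m') * mv \<sigma> m'))"
    by (simp add: sub_sum sub_single Cst_mult mv_add ac_simps)
  also have "\<dots> = sub \<sigma> p * sub \<sigma> q"
    by (simp add: sub_def sum_product)
  finally show ?thesis .
qed

lemma sub_Cst [simp]: "sub \<sigma> (Cst a) = Cst a"
  by (simp add: Cst_def sub_single)

lemma sub_one [simp]: "sub \<sigma> 1 = 1"
  using sub_Cst[of \<sigma> 1] by (simp add: Cst_def)

lemma sub_X [simp]: "sub \<sigma> (Xv i) = \<sigma> i"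
  by (simp add: Xv_def sub_single mv_def Cst_def)

lemma Xpow: "(Xv i :: 'a::comm_ring_1 mpoly) ^ k = Poly_Mapping.single (Poly_Mapping.single i k) 1"
proof (induction k)
  case (Suc k)
  have "Poly_Mapping.single i 1 + Poly_Mapping.single i k = Poly_Mapping.single i (Suc k)"
    by (simp flip: single_add)
  then show ?case using Suc by (simp add: Xv_def mult_single)
qed (simp add: Xv_def)

lemma prod_singles:
  "(\<Prod>i\<in>A. Poly_Mapping.single (f i) (1::'a::comm_ring_1)) = Poly_Mapping.single (\<Sum>i\<in>A. f i) 1"
  by (induction A rule: infinite_finite_induct) (simp_all add: mult_single)

lemma mv_X: "mv Xv m = (Poly_Mapping.single m 1 :: 'a::comm_ring_1 mpoly)"
  unfolding mv_def Xpow prod_singles by (simp flip: pm_sum_singles)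

lemma single_as_mv: "Poly_Mapping.single m a = Cst a * mv Xv m"
  unfolding mv_X by (simp add: Cst_def mult_single)



lemma pr_iff: "p \<in> polyring N \<longleftrightarrow> (\<forall>m\<in>Poly_Mapping.keys p. Poly_Mapping.keys m \<subseteq> {1..N})"
  by (simp add: polyring_def)

lemma pr_zero [simp]: "0 \<in> polyring N" by (simp add: polyring_def)
lemma pr_one [simp]: "1 \<in> polyring N" by (simp add: polyring_def)
lemma pr_Cst [simp]: "Cst a \<in> polyring N" by (simp add: polyring_def Cst_def)
lemma pr_X: "1 \<le> i \<Longrightarrow> i \<le> N \<Longrightarrow> Xv i \<in> polyring N" by (simp add: polyring_def Xv_def)

lemma pr_X': "i \<in> {1..N} \<Longrightarrow> Xv i \<in> polyring N" by (simp add: pr_X)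

lemma pr_add: "p \<in> polyring N \<Longrightarrow> q \<in> polyring N \<Longrightarrow> p + q \<in> polyring N"
  unfolding pr_iff
proof (intro impI ballI)
  fix m assume "\<forall>m\<in>Poly_Mapping.keys p. Poly_Mapping.keys m \<subseteq> {1..N}"
    "\<forall>m\<in>Poly_Mapping.keys q. Poly_Mapping.keys m \<subseteq> {1..N}" "m \<in> Poly_Mapping.keys (p + q)"
  then show "Poly_Mapping.keys m \<subseteq> {1..N}" using keys_add[of p q] by blast
qed

lemma pr_uminus: "p \<in> polyring N \<Longrightarrow> - p \<in> polyring N"
  unfolding polyring_def by simp

lemma pr_diff: "p \<in> polyring N \<Longrightarrow> q \<in> polyring N \<Longrightarrow> p - q \<in> polyring N"
  using pr_add[of p N "-q"] pr_uminus[of q N] by simp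

lemma pr_mult: "p \<in> polyring N \<Longrightarrow> q \<in> polyring N \<Longrightarrow> p * q \<in> polyring N"
  unfolding pr_iff
proof (intro impI ballI)
  fix m assume A: "\<forall>m\<in>Poly_Mapping.keys p. Poly_Mapping.keys m \<subseteq> {1..N}"
    "\<forall>m\<in>Poly_Mapping.keys q. Poly_Mapping.keys m \<subseteq> {1..N}" "m \<in> Poly_Mapping.keys (p * q)"
  then obtain a b where "m = a + b" "a \<in> Poly_Mapping.keys p" "b \<in> Poly_Mapping.keys q"
    using keys_mult[of p q] by blast
  then show "Poly_Mapping.keys m \<subseteq> {1..N}" using A by (simp add: keys_add_nat)
qed

lemma pr_sum: "(\<And>i. i \<in> A \<Longrightarrow> f i \<in> polyring N) \<Longrightarrow> (\<Sum>i\<in>A. f i) \<in> polyring N"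
  by (induction A rule: infinite_finite_induct) (auto intro: pr_add)

lemma pr_prod: "(\<And>i. i \<in> A \<Longrightarrow> f i \<in> polyring N) \<Longrightarrow> (\<Prod>i\<in>A. f i) \<in> polyring N"
  by (induction A rule: infinite_finite_induct) (auto intro: pr_mult)

lemma pr_power: "p \<in> polyring N \<Longrightarrow> p ^ k \<in> polyring N"
  by (induction k) (auto intro: pr_mult)

lemma Var_pos: "i \<noteq> 0 \<Longrightarrow> Var N i = Xv i" by (simp add: Var_def Xv_def)

lemma Var_zero: "Var N 0 = 1 - (\<Sum>j\<in>{1..N}. Xv j)" by (simp add: Var_def Xv_def)

lemma pr_Var: assumes "i \<le> N" shows "Var N i \<in> polyring N"
proof (cases "i = 0")
  case True
  have "(\<Sum>j\<in>{1..N}. Xv j) \<in> polyring N" by (rule pr_sum) (auto intro: pr_X)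
  from pr_diff[OF pr_one this] show ?thesis using True by (simp add: Var_zero)
next
  case False
  then show ?thesis using assms by (simp add: Var_pos pr_X)
qed

lemma pr_mv:
  assumes "Poly_Mapping.keys m \<subseteq> {1..N}" "\<And>i. 1 \<le> i \<Longrightarrow> i \<le> N \<Longrightarrow> \<sigma> i \<in> polyring N"
  shows "mv \<sigma> m \<in> polyring N"
  unfolding mv_def
proof (rule pr_prod)
  fix i assume "i \<in> Poly_Mapping.keys m"
  with assms show "\<sigma> i ^ Poly_Mapping.lookup m i \<in> polyring N" by (auto intro!: pr_power)
qed

lemma pr_sub:
  assumes "p \<in> polyring N" "\<And>i. 1 \<le> i \<Longrightarrow> i \<le> N \<Longrightarrow> \<sigma> i \<in> polyring N"
  shows "sub \<sigma> p \<in> polyring N"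
  unfolding sub_def
proof (rule pr_sum)
  fix m assume "m \<in> Poly_Mapping.keys p"
  with assms(1) have "Poly_Mapping.keys m \<subseteq> {1..N}" by (simp add: pr_iff)
  then show "Cst (Poly_Mapping.lookup p m) * mv \<sigma> m \<in> polyring N"
    using assms(2) by (intro pr_mult pr_Cst pr_mv)
qed

lemma gi_iff: "x \<in> gen_ideal N S \<longleftrightarrow> (\<exists>F c. x = (\<Sum>s\<in>F. c s * s) \<and> finite F \<and> F \<subseteq> S \<and> (\<forall>s\<in>F. c s \<in> polyring N))"
  by (auto simp: gen_ideal_def)

lemma gi_zero [simp]: "0 \<in> gen_ideal N S"
  unfolding gi_iff by (rule exI[of _ "{}"]) auto

lemma gi_gen: "s \<in> S \<Longrightarrow> s \<in> gen_ideal N S"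
  unfolding gi_iff by (intro exI[of _ "{s}"] exI[of _ "\<lambda>_. 1"]) auto

lemma gi_add:
  assumes "x \<in> gen_ideal N S" "y \<in> gen_ideal N S"
  shows "x + y \<in> gen_ideal N S"
proof -
  obtain F1 c1 where 1: "x = (\<Sum>s\<in>F1. c1 s * s)" "finite F1" "F1 \<subseteq> S" "\<forall>s\<in>F1. c1 s \<in> polyring N"
    using assms(1) by (auto simp: gi_iff)
  obtain F2 c2 where 2: "y = (\<Sum>s\<in>F2. c2 s * s)" "finite F2" "F2 \<subseteq> S" "\<forall>s\<in>F2. c2 s \<in> polyring N"
    using assms(2) by (auto simp: gi_iff)
  let ?F = "F1 \<union> F2"
  let ?c = "\<lambda>s. (if s \<in> F1 then c1 s else 0) + (if s \<in> F2 then c2 s else 0)"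
  have "(\<Sum>s\<in>?F. ?c s * s) = (\<Sum>s\<in>?F. (if s \<in> F1 then c1 s * s else 0) + (if s \<in> F2 then c2 s * s else 0))"
    by (rule sum.cong) (auto simp: distrib_right)
  also have "\<dots> = (\<Sum>s\<in>?F. (if s \<in> F1 then c1 s * s else 0)) + (\<Sum>s\<in>?F. (if s \<in> F2 then c2 s * s else 0))"
    by (rule sum.distrib)
  also have "\<dots> = (\<Sum>s\<in>?F \<inter> F1. c1 s * s) + (\<Sum>s\<in>?F \<inter> F2. c2 s * s)"
    using 1 2 by (simp only: sum.inter_restrict finite_Un)
  also have "\<dots> = x + y" using 1 2 by (simp add: Int_absorb1)
  finally have "x + y = (\<Sum>s\<in>?F. ?c s * s)" by simp
  moreover have "\<forall>s\<in>?F. ?c s \<in> polyring N" using 1 2 by (auto intro!: pr_add)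
  ultimately show ?thesis using 1 2 unfolding gi_iff
    by (intro exI[of _ ?F] exI[of _ ?c]) auto
qed

lemma gi_mult:
  assumes "r \<in> polyring N" "x \<in> gen_ideal N S"
  shows "r * x \<in> gen_ideal N S"
proof -
  obtain F c where 1: "x = (\<Sum>s\<in>F. c s * s)" "finite F" "F \<subseteq> S" "\<forall>s\<in>F. c s \<in> polyring N"
    using assms(2) by (auto simp: gi_iff)
  have "r * x = (\<Sum>s\<in>F. (r * c s) * s)" using 1 by (simp add: sum_distrib_left mult.assoc)
  moreover have "\<forall>s\<in>F. r * c s \<in> polyring N" using 1 assms(1) by (auto intro: pr_mult)
  ultimately show ?thesis using 1 unfolding gi_iff
    by (intro exI[of _ F] exI[of _ "\<lambda>s. r * c s"]) auto
qed

lemma gi_mult_right: "r \<in> polyring N \<Longrightarrow> x \<in> gen_ideal N S \<Longrightarrow> x * r \<in> gen_ideal N S"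
  using gi_mult by (metis mult.commute)

lemma gi_uminus: assumes "x \<in> gen_ideal N S" shows "- x \<in> gen_ideal N S"
proof -
  have "-1 \<in> polyring N" by (rule pr_uminus) simp
  from gi_mult[OF this assms] show ?thesis by simp
qed

lemma gi_diff: assumes "x \<in> gen_ideal N S" "y \<in> gen_ideal N S" shows "x - y \<in> gen_ideal N S"
proof -
  have "x + - y \<in> gen_ideal N S" using assms by (intro gi_add gi_uminus)
  then show ?thesis by simp
qed

lemma gi_sum: "(\<And>i. i \<in> A \<Longrightarrow> f i \<in> gen_ideal N S) \<Longrightarrow> (\<Sum>i\<in>A. f i) \<in> gen_ideal N S"
  by (induction A rule: infinite_finite_induct) (auto intro: gi_add)

lemma gi_subset_pr: assumes "S \<subseteq> polyring N" shows "gen_ideal N S \<subseteq> polyring N"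
proof
  fix x assume "x \<in> gen_ideal N S"
  then obtain F c where 1: "x = (\<Sum>s\<in>F. c s * s)" "finite F" "F \<subseteq> S" "\<forall>s\<in>F. c s \<in> polyring N"
    by (auto simp: gi_iff)
  show "x \<in> polyring N" unfolding 1(1)
    by (rule pr_sum, rule pr_mult) (use 1 assms in auto)
qed

lemma gi_sub:
  assumes "x \<in> gen_ideal N S" "\<And>i. 1 \<le> i \<Longrightarrow> i \<le> N \<Longrightarrow> \<sigma> i \<in> polyring N"
    "\<And>s. s \<in> S \<Longrightarrow> sub \<sigma> s \<in> gen_ideal N T"
  shows "sub \<sigma> x \<in> gen_ideal N T"
proof -
  obtain F c where 1: "x = (\<Sum>s\<in>F. c s * s)" "finite F" "F \<subseteq> S" "\<forall>s\<in>F. c s \<in> polyring N"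
    using assms(1) by (auto simp: gi_iff)
  have "sub \<sigma> x = (\<Sum>s\<in>F. sub \<sigma> (c s) * sub \<sigma> s)" using 1 by (simp add: sub_sum sub_mult)
  also have "\<dots> \<in> gen_ideal N T"
  proof (rule gi_sum)
    fix s assume "s \<in> F"
    then show "sub \<sigma> (c s) * sub \<sigma> s \<in> gen_ideal N T"
      using 1 assms by (intro gi_mult pr_sub) auto
  qed
  finally show ?thesis .
qed

lemma gi_mult_diff:
  assumes "a \<in> polyring N" "b \<in> polyring N" "c \<in> polyring N" "d \<in> polyring N"
    "a - b \<in> gen_ideal N S" "c - d \<in> gen_ideal N S"
  shows "a * c - b * d \<in> gen_ideal N S"
proof -
  have "a * c - b * d = a * (c - d) + d * (a - b)" by (simp add: algebra_simps)
  thus ?thesis using assms by (simp add: gi_add gi_mult)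
qed

lemma gi_power_diff:
  assumes "a \<in> polyring N" "b \<in> polyring N" "a - b \<in> gen_ideal N S"
  shows "a ^ k - b ^ k \<in> gen_ideal N S"
proof (induction k)
  case (Suc k)
  show ?case unfolding power_Suc
    by (rule gi_mult_diff) (use assms Suc in \<open>simp_all add: pr_power\<close>)
qed simp

lemma gi_prod_diff:
  assumes "\<And>i. i \<in> A \<Longrightarrow> x i \<in> polyring N \<and> y i \<in> polyring N \<and> x i - y i \<in> gen_ideal N S"
  shows "(\<Prod>i\<in>A. x i ^ e i) - (\<Prod>i\<in>A. y i ^ e i) \<in> gen_ideal N S"
  using assms
proof (induction A rule: infinite_finite_induct)
  case (insert a A)
  have h: "\<And>i. i \<in> A \<Longrightarrow> x i \<in> polyring N \<and> y i \<in> polyring N \<and> x i - y i \<in> gen_ideal N S"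
    using insert.prems by auto
  have ha: "x a \<in> polyring N" "y a \<in> polyring N" "x a - y a \<in> gen_ideal N S" using insert.prems by auto
  show ?case unfolding prod.insert[OF insert(1,2)]
    apply (rule gi_mult_diff)
    using ha h insert.IH[OF h] by (auto intro!: pr_prod pr_power gi_power_diff)
qed auto

lemma gi_congr:
  assumes "p \<in> polyring N"
    "\<And>i. 1 \<le> i \<Longrightarrow> i \<le> N \<Longrightarrow> \<sigma> i \<in> polyring N \<and> Xv i - \<sigma> i \<in> gen_ideal N S"
  shows "p - sub \<sigma> p \<in> gen_ideal N S"
proof -
  have "p - sub \<sigma> p = (\<Sum>m\<in>Poly_Mapping.keys p. Cst (Poly_Mapping.lookup p m) * (mv Xv m - mv \<sigma> m))"
    by (subst (1) pm_sum_singles[of p]) (simp add: single_as_mv sub_def sum_subtractf right_diff_distrib)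
  also have "\<dots> \<in> gen_ideal N S"
  proof (rule gi_sum)
    fix m assume m: "m \<in> Poly_Mapping.keys p"
    with assms(1) have km: "Poly_Mapping.keys m \<subseteq> {1..N}" by (simp add: pr_iff)
    show "Cst (Poly_Mapping.lookup p m) * (mv Xv m - mv \<sigma> m) \<in> gen_ideal N S"
      unfolding mv_def
      by (rule gi_mult[OF pr_Cst], rule gi_prod_diff) (use km assms(2) in \<open>auto intro!: pr_X' subsetD[OF km]\<close>)
  qed
  finally show ?thesis .
qed



lemma sum_Var_one: "(\<Sum>k\<in>{0..N}. Var N k) = (1 :: 'a::comm_ring_1 mpoly)"
proof -
  have e: "{0..N} = insert 0 {1..N}" by auto
  have "(\<Sum>k\<in>{1..N}. Var N k) = (\<Sum>k\<in>{1..N}. (Xv k :: 'a mpoly))"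
    by (rule sum.cong) (auto simp: Var_pos)
  then show ?thesis unfolding e by (simp add: Var_zero)
qed

theorem lemma2p30:
  fixes N n :: nat and \<JJ> :: "nat set set"
  assumes "n \<le> N" and "\<forall>J\<in>\<JJ>. J \<subseteq> {0..N}"
  shows "ideal_sum (gen_ideal N (Var N ` {n+1..N}))
           (ideal_Inter N ((\<lambda>J. gen_ideal N (Var N ` J)) ` \<JJ>))
       = (ideal_Inter N ((\<lambda>J. ideal_sum (gen_ideal N (Var N ` J)) (gen_ideal N (Var N ` {n+1..N}))) ` \<JJ>)
           :: 'a::comm_ring_1 mpoly set)"
proof -
  define M where "M = {n+1..N}"
  define K :: "'a mpoly set" where "K = gen_ideal N (Var N ` M)"
  define P :: "nat set \<Rightarrow> 'a mpoly set" where "P J = gen_ideal N (Var N ` J)" for J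
  define s :: "'a mpoly" where "s = (\<Sum>j\<in>M. Xv j)"
  define \<sigma> :: "nat \<Rightarrow> nat \<Rightarrow> 'a mpoly" where
    "\<sigma> k i = (if i \<in> M then 0 else if i = k then Xv i + s else Xv i)" for k i
  have MN: "M \<subseteq> {1..N}" by (auto simp: M_def)
  have Kpr: "K \<subseteq> polyring N" unfolding K_def
    by (rule gi_subset_pr) (auto simp: M_def intro!: pr_Var)
  have Ppr: "P J \<subseteq> polyring N" if "J \<subseteq> {0..N}" for J unfolding P_def
    by (rule gi_subset_pr) (use that in \<open>auto intro!: pr_Var simp: subset_iff\<close>)
  have spr: "s \<in> polyring N" unfolding s_def by (rule pr_sum) (auto simp: M_def intro!: pr_X)
  have sK: "s \<in> K" unfolding s_def K_def
  proof (rule gi_sum)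
    fix j assume "j \<in> M"
    then have "Xv j = Var N j" "Var N j \<in> Var N ` M" by (auto simp: M_def Var_pos)
    then show "Xv j \<in> gen_ideal N (Var N ` M)" by (metis gi_gen)
  qed
  have XK: "Xv j \<in> K" if "j \<in> M" for j
  proof -
    have "Xv j = Var N j" "Var N j \<in> Var N ` M" using that by (auto simp: M_def Var_pos)
    then show ?thesis unfolding K_def by (metis gi_gen)
  qed
  have \<sigma>pr: "\<sigma> k i \<in> polyring N" if "1 \<le> i" "i \<le> N" for k i
    using that by (auto simp: \<sigma>_def intro!: pr_add pr_X spr)
  have \<sigma>cong: "Xv i - \<sigma> k i \<in> K" if "1 \<le> i" "i \<le> N" for k i
  proof -
    consider "i \<in> M" | "i \<notin> M" "i = k" | "i \<notin> M" "i \<noteq> k" by blast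
    then show ?thesis
    proof cases
      case 1 then show ?thesis by (simp add: \<sigma>_def XK)
    next
      case 2
      have "- s \<in> K" using sK unfolding K_def by (rule gi_uminus)
      then show ?thesis using 2 by (simp add: \<sigma>_def)
    next
      case 3 then show ?thesis by (simp add: \<sigma>_def K_def)
    qed
  qed
  have sub0: "sub (\<sigma> k) (Var N 0) = Var N 0" if "k \<in> {1..n}" for k
  proof -
    have "(\<Sum>j\<in>{1..N}. \<sigma> k j) = (\<Sum>j\<in>{1..N}. Xv j + (if j = k then s else 0) - (if j \<in> M then Xv j else 0))"
      by (rule sum.cong) (use that in \<open>auto simp: \<sigma>_def M_def\<close>)
    also have "\<dots> = (\<Sum>j\<in>{1..N}. Xv j) + s - (\<Sum>j\<in>{1..N} \<inter> M. Xv j)"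
      using that assms(1) by (simp add: sum_subtractf sum.distrib sum.inter_restrict)
    also have "{1..N} \<inter> M = M" using MN by auto
    finally have "(\<Sum>j\<in>{1..N}. \<sigma> k j) = (\<Sum>j\<in>{1..N}. Xv j)" by (simp add: s_def)
    then show ?thesis by (simp add: Var_zero sub_diff sub_sum)
  qed
  have subP: "sub (\<sigma> k) x \<in> P J"
    if J: "J \<subseteq> {0..N}" and k: "k \<in> {0..n}" "k \<notin> J" and x: "x \<in> P J \<or> x \<in> K" for J k x
  proof -
    have gens: "sub (\<sigma> k) g \<in> P J" if "g \<in> Var N ` J \<or> g \<in> Var N ` M" for g
    proof -
      from that obtain i where i: "g = Var N i" "i \<in> J \<or> i \<in> M" by blast
      show ?thesis
      proof (cases "i = 0")
        case True
        then have "i \<in> J" using i MN by auto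
        then have "k \<noteq> 0" using k(2) True by metis
        then have "sub (\<sigma> k) g = Var N i" using True i k by (simp add: sub0)
        then show ?thesis using \<open>i \<in> J\<close> by (simp add: P_def gi_gen)
      next
        case False
        then have "sub (\<sigma> k) g = \<sigma> k i" using i by (simp add: Var_pos)
        moreover have "\<sigma> k i \<in> P J"
        proof (cases "i \<in> M")
          case True then show ?thesis by (simp add: \<sigma>_def P_def)
        next
          case nM: False
          then have "i \<in> J" "i \<noteq> k" using i k by auto
          then have "\<sigma> k i = Var N i" using nM False by (simp add: \<sigma>_def Var_pos)
          then show ?thesis using \<open>i \<in> J\<close> unfolding P_def by (metis gi_gen imageI)
        qed
        ultimately show ?thesis by simp
      qed
    qed
    from x show ?thesis
    proof
      assume "x \<in> P J"
      then show ?thesis unfolding P_def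
        by (rule gi_sub) (use \<sigma>pr gens in \<open>auto simp: P_def\<close>)
    next
      assume "x \<in> K"
      then show ?thesis unfolding K_def P_def
        by (rule gi_sub) (use \<sigma>pr gens in \<open>auto simp: P_def\<close>)
    qed
  qed
  have "ideal_sum K (ideal_Inter N (P ` \<JJ>)) = ideal_Inter N ((\<lambda>J. ideal_sum (P J) K) ` \<JJ>)"
  proof (intro equalityI subsetI)
    fix x assume "x \<in> ideal_sum K (ideal_Inter N (P ` \<JJ>))"
    then obtain a b where ab: "x = a + b" "a \<in> K" "b \<in> polyring N" "\<forall>J\<in>\<JJ>. b \<in> P J"
      by (auto simp: ideal_sum_def ideal_Inter_def)
    have "x \<in> polyring N" using ab Kpr by (auto intro: pr_add)
    moreover have "x \<in> ideal_sum (P J) K" if "J \<in> \<JJ>" for J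
    proof -
      have "x = b + a" "b \<in> P J" "a \<in> K" using ab that by (auto simp: add.commute)
      then show ?thesis unfolding ideal_sum_def by blast
    qed
    ultimately show "x \<in> ideal_Inter N ((\<lambda>J. ideal_sum (P J) K) ` \<JJ>)"
      by (auto simp: ideal_Inter_def)
  next
    fix f assume "f \<in> ideal_Inter N ((\<lambda>J. ideal_sum (P J) K) ` \<JJ>)"
    then have fpr: "f \<in> polyring N" and fJ: "\<And>J. J \<in> \<JJ> \<Longrightarrow> \<exists>a b. f = a + b \<and> a \<in> P J \<and> b \<in> K"
      by (auto simp: ideal_Inter_def ideal_sum_def)
    define h where "h = (\<Sum>k\<in>{0..n}. Var N k * sub (\<sigma> k) f)"
    have subpr: "sub (\<sigma> k) f \<in> polyring N" for k
      using fpr \<sigma>pr by (intro pr_sub) auto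
    have hpr: "h \<in> polyring N" unfolding h_def
      using assms(1) subpr by (intro pr_sum pr_mult pr_Var) auto
    have hP: "h \<in> P J" if JJ: "J \<in> \<JJ>" for J
    proof -
      have J: "J \<subseteq> {0..N}" using assms(2) JJ by auto
      have tm: "Var N k * sub (\<sigma> k) f \<in> P J" if k: "k \<in> {0..n}" for k
      proof (cases "k \<in> J")
        case True
        then have "Var N k \<in> P J" unfolding P_def by (metis gi_gen imageI)
        then show ?thesis unfolding P_def by (metis gi_mult_right subpr)
      next
        case False
        obtain a b where ab: "f = a + b" "a \<in> P J" "b \<in> K" using fJ[OF JJ] by blast
        have "sub (\<sigma> k) a \<in> P J" using J k False ab by (intro subP) auto
        moreover have "sub (\<sigma> k) b \<in> P J" using J k False ab by (intro subP) auto
        ultimately have "sub (\<sigma> k) f \<in> P J" unfolding ab(1) sub_add P_def by (rule gi_add)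
        moreover have "Var N k \<in> polyring N" using k assms(1) by (intro pr_Var) auto
        ultimately show ?thesis unfolding P_def by (metis gi_mult)
      qed
      show ?thesis unfolding h_def P_def by (rule gi_sum) (use tm in \<open>simp add: P_def\<close>)
    qed
    have split: "{0..N} = {0..n} \<union> M" using assms(1) by (auto simp: M_def)
    have "f = f * (\<Sum>k\<in>{0..N}. Var N k)" by (simp add: sum_Var_one)
    also have "\<dots> = (\<Sum>k\<in>{0..n}. Var N k * f) + (\<Sum>j\<in>M. Var N j * f)"
      unfolding split by (subst sum.union_disjoint) (auto simp: M_def sum_distrib_left distrib_left mult.commute)
    finally have "f - h = (\<Sum>j\<in>M. Var N j * f) + (\<Sum>k\<in>{0..n}. Var N k * (f - sub (\<sigma> k) f))"
      unfolding h_def by (simp add: algebra_simps sum_subtractf)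
    also have "\<dots> \<in> K"
      unfolding K_def
    proof (rule gi_add)
      show "(\<Sum>j\<in>M. Var N j * f) \<in> gen_ideal N (Var N ` M)"
        by (rule gi_sum, rule gi_mult_right[OF fpr], rule gi_gen) auto
      show "(\<Sum>k\<in>{0..n}. Var N k * (f - sub (\<sigma> k) f)) \<in> gen_ideal N (Var N ` M)"
      proof (rule gi_sum, rule gi_mult)
        fix k assume "k \<in> {0..n}"
        then show "Var N k \<in> polyring N" using assms(1) by (intro pr_Var) auto
        show "f - sub (\<sigma> k) f \<in> gen_ideal N (Var N ` M)"
          by (rule gi_congr[OF fpr]) (use \<sigma>pr \<sigma>cong in \<open>auto simp: K_def\<close>)
      qed
    qed
    finally have "f - h \<in> K" .
    then show "f \<in> ideal_sum K (ideal_Inter N (P ` \<JJ>))"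
      unfolding ideal_sum_def ideal_Inter_def using hpr hP
      by (intro CollectI exI[of _ "f - h"] exI[of _ h]) auto
  qed
  then show ?thesis by (simp add: K_def P_def M_def)
qed


end
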